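(* Let $\mathcal{C}$ be an $[n,k]$ cyclic code over $\mathbb{F}_q$ with $\gcd(n,q)=1$ and composite length $n$. Let $\tau=\{x_1,\ldots,x_L\}$ be a chain of divisors of $n$ and assume the coordinates of $\mathcal{C}$ are permuted according to the ordering $\gamma$ determined by $\tau$. Put $x_{L+1}=n$. Then $$\max_{i\in[0,n]} s_i\le\min\Big\{k,\ n-k,\ \sum_{i=1}^{L}\Big(\frac{x_{i+1}}{x_i}-1\Big)p^{x_i}+x_1-k,\ \sum_{i=1}^{L}\Big(\frac{x_{i+1}}{x_i}-1\Big)(x_i-p_{x_i})+x_1-(n-k)\Big\}.$$
   Context: Chain: a set $\tau=\{x_1,\ldots,x_L\}$ of divisors of $n$ other than $1$ and $n$ with $x_a\mid x_b$ and $x_a\ne x_b$ for $a<b$. Support sets: for $y\mid n$, the length-$y$ support sets are $\{j\in\{0,\ldots,n-1\}: j\equiv a \bmod n/y\}$, $a\in\{0,\ldots,n/y-1\}$. Ordering $\gamma$: for $1\le l\le L$, each length-$x_{l+1}$ support set $\{j: j\equiv b\bmod n/x_{l+1}\}$ is the disjoint union of the length-$x_l$ support sets $\{j:j\equiv a\bmod n/x_l\}$ with $a\equiv b \bmod n/x_{l+1}$, its children, ordered by increasing $a$. Starting from $\{0,\ldots,n-1\}$, list the length-$x_1$ support sets in depth-first order of this tree (children in the stated order), each with its elements in increasing order; the resulting sequence $\gamma=(\gamma(0),\ldots,\gamma(n-1))$ is a permutation of $\{0,\ldots,n-1\}$, and the permuted code is $\{(c_{\gamma(0)},\ldots,c_{\gamma(n-1)}):\underline{c}\in\mathcal{C}\}$.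 (E.g. $n=16$, $\tau=\{4,8\}$ gives $\gamma=(0,4,8,12,2,6,10,14,1,5,9,13,3,7,11,15)$.) For the permuted code and $0\le i\le n$: $p_i$ is the dimension of $\{\underline{c}: c_i=\cdots=c_{n-1}=0\}$, $f_i$ the dimension of $\{\underline{c}: c_0=\cdots=c_{i-1}=0\}$, $p^i$ the dimension of the code punctured to the first $i$ coordinates $\{(c_0,\ldots,c_{i-1})\}$, and the state complexity is $s_i=k-p_i-f_i$ (the base-$q$ logarithm of the number of vertices at level $i$ of the minimal trellis). *)

theory Defs
  imports Complex_Main "HOL-Library.Function_Algebras" "HOL-Computational_Algebra.Primes"
begin

text \<open>Words of length n over a field are functions nat => 'a vanishing outside {0..<n}.
  Scalar multiplication on words:\<close>
definition wscale :: "'a::field \<Rightarrow> (nat \<Rightarrow> 'a) \<Rightarrow> (nat \<Rightarrow> 'a)" where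
  "wscale a c = (\<lambda>j. a * c j)"

definition wdim :: "(nat \<Rightarrow> 'a::field) set \<Rightarrow> nat" where
  "wdim S = vector_space.dim wscale S"

definition linear_code :: "nat \<Rightarrow> (nat \<Rightarrow> 'a::field) set \<Rightarrow> bool" where
  "linear_code n C \<longleftrightarrow> module.subspace wscale C \<and> (\<forall>c\<in>C. \<forall>j\<ge>n. c j = 0)"

definition cshift :: "nat \<Rightarrow> (nat \<Rightarrow> 'a::zero) \<Rightarrow> (nat \<Rightarrow> 'a)" where
  "cshift n c = (\<lambda>j. if j < n then c ((j + n - 1) mod n) else 0)"

definition cyclic_code :: "nat \<Rightarrow> (nat \<Rightarrow> 'a::field) set \<Rightarrow> bool" where
  "cyclic_code n C \<longleftrightarrow> linear_code n C \<and> (\<forall>c\<in>C. cshift n c \<in> C)"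

definition divisor_chain :: "nat \<Rightarrow> nat list \<Rightarrow> bool" where
  "divisor_chain n xs \<longleftrightarrow> xs \<noteq> [] \<and> (\<forall>x\<in>set xs. x dvd n \<and> x \<noteq> 1 \<and> x \<noteq> n) \<and>
     (\<forall>a. Suc a < length xs \<longrightarrow> xs ! a dvd xs ! Suc a \<and> xs ! a \<noteq> xs ! Suc a)"

text \<open>Depth-first listing of the support-set tree. gam_dfs n y b zs lists the
  node {j. j mod (n div y) = b} of length y, whose descendants have lengths zs (descending).\<close>
primrec gam_dfs :: "nat \<Rightarrow> nat \<Rightarrow> nat \<Rightarrow> nat list \<Rightarrow> nat list" where
  "gam_dfs n y b [] = filter (\<lambda>j. j mod (n div y) = b) [0..<n]"
| "gam_dfs n y b (z # zs) =
     concat (map (\<lambda>a. gam_dfs n z a zs) (filter (\<lambda>a. a mod (n div y) = b) [0..<n div z]))"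

definition gamma_order :: "nat \<Rightarrow> nat list \<Rightarrow> nat list" where
  "gamma_order n xs = gam_dfs n n 0 (rev xs)"

definition permute_code :: "nat \<Rightarrow> nat list \<Rightarrow> (nat \<Rightarrow> 'a::zero) set \<Rightarrow> (nat \<Rightarrow> 'a) set" where
  "permute_code n g C = (\<lambda>c. \<lambda>i. if i < n then c (g ! i) else 0) ` C"

definition past_dim :: "nat \<Rightarrow> (nat \<Rightarrow> 'a::field) set \<Rightarrow> nat \<Rightarrow> nat" where
  "past_dim n C i = wdim {c\<in>C. \<forall>j. i \<le> j \<and> j < n \<longrightarrow> c j = 0}"

definition future_dim :: "nat \<Rightarrow> (nat \<Rightarrow> 'a::field) set \<Rightarrow> nat \<Rightarrow> nat" where
  "future_dim n C i = wdim {c\<in>C. \<forall>j<i. c j = 0}"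

definition punct_dim :: "(nat \<Rightarrow> 'a::field) set \<Rightarrow> nat \<Rightarrow> nat" where
  "punct_dim C i = wdim ((\<lambda>c j. if j < i then c j else 0) ` C)"

definition state_cx :: "nat \<Rightarrow> (nat \<Rightarrow> 'a::field) set \<Rightarrow> nat \<Rightarrow> int" where
  "state_cx n C i = int (wdim C) - int (past_dim n C i) - int (future_dim n C i)"

end

theory Submission
  imports Defs
begin

interpretation W: vector_space "wscale :: 'a::field \<Rightarrow> (nat \<Rightarrow> 'a) \<Rightarrow> (nat \<Rightarrow> 'a)"
  by unfold_locales (auto simp: wscale_def fun_eq_iff algebra_simps)

context vector_space begin

lemma fd_basis:
  assumes "V \<subseteq> span E" "finite E"
  obtains B where "B \<subseteq> V" "independent B" "V \<subseteq> span B" "card B = dim V" "finite B"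
proof -
  obtain B where B: "B \<subseteq> V" "independent B" "V \<subseteq> span B" "card B = dim V"
    using basis_exists by blast
  have "finite B" using independent_span_bound[OF assms(2) B(2)] B(1) assms(1) by blast
  then show ?thesis using that B by blast
qed

lemma span_sub_fd: "W \<subseteq> span E \<Longrightarrow> span W \<subseteq> span E"
  by (metis span_minimal subspace_span)

lemma dim_mono_fd:
  assumes "V \<subseteq> span W" "W \<subseteq> span E" "finite E"
  shows "dim V \<le> dim W"
proof -
  have VE: "V \<subseteq> span E" using assms span_sub_fd by blast
  obtain A where A: "A \<subseteq> V" "independent A" "V \<subseteq> span A" "card A = dim V" "finite A"
    using fd_basis[OF VE assms(3)] by blast
  obtain B where B: "B \<subseteq> W" "independent B" "W \<subseteq> span B" "card B = dim W" "finite B"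
    using fd_basis[OF assms(2,3)] by blast
  have "A \<subseteq> span B" using A(1) assms(1) span_sub_fd[OF B(3)] by blast
  from independent_span_bound[OF B(5) A(2) this] A B show ?thesis by simp
qed

lemma dim_Un_fd:
  assumes "X \<subseteq> span E" "Y \<subseteq> span E" "finite E"
  shows "dim (X \<union> Y) \<le> dim X + dim Y"
proof -
  obtain A where A: "A \<subseteq> X" "independent A" "X \<subseteq> span A" "card A = dim X" "finite A"
    using fd_basis[OF assms(1,3)] by blast
  obtain B where B: "B \<subseteq> Y" "independent B" "Y \<subseteq> span B" "card B = dim Y" "finite B"
    using fd_basis[OF assms(2,3)] by blast
  have "X \<union> Y \<subseteq> span (A \<union> B)" using A(3) B(3) span_mono[of A "A \<union> B"] span_mono[of B "A \<union> B"]
    by blast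
  then have "dim (X \<union> Y) \<le> card (A \<union> B)" using dim_le_card A(5) B(5) by blast
  also have "\<dots> \<le> card A + card B" by (rule card_Un_le)
  finally show ?thesis using A B by simp
qed

lemma dim_inj_image:
  assumes lf: "module_hom scale scale f" and fi: "inj_on f (span S)"
  shows "dim (f ` S) = dim S"
proof -
  interpret lf: module_hom scale scale f by fact
  obtain B where B: "B \<subseteq> S" "independent B" "S \<subseteq> span B" "card B = dim S"
    using basis_exists[of S] by auto
  then have sp: "span S = span B"
    using span_mono[of B S] span_mono[of S "span B"] span_span[of B] by auto
  moreover have "card (f ` B) = card B"
    using assms card_image[of f B] inj_on_subset[of f "span S" B] B span_superset by auto
  moreover have "independent (f ` B)"
  proof
    assume "dependent (f ` B)"
    from lf.dependent_inj_imageD[OF this] fi sp B(2) show False by simp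
  qed
  moreover have "span (f ` S) = span (f ` B)" using lf.span_image sp by simp
  ultimately show ?thesis using B(4)
    by (metis dim_eq_card_independent dim_span)
qed

lemma rank_nullity_fd:
  assumes lf: "module_hom scale scale f" and D: "subspace D" and DE: "D \<subseteq> span E" and E: "finite E"
  shows "dim D = dim (f ` D) + dim {x\<in>D. f x = 0}"
proof -
  interpret lf: module_hom scale scale f by fact
  define K where "K = {x\<in>D. f x = 0}"
  obtain BK where BK: "BK \<subseteq> K" "independent BK" "K \<subseteq> span BK" "card BK = dim K"
    using basis_exists[of K] by auto
  have "BK \<subseteq> D" using BK(1) K_def by auto
  then obtain B where B: "BK \<subseteq> B" "B \<subseteq> D" "independent B" "D \<subseteq> span B"
    using maximal_independent_subset_extend[OF _ BK(2)] by metis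
  have fB: "finite B" using independent_span_bound[OF E B(3)] B(2) DE by blast
  have cB: "card B = dim D" using basis_card_eq_dim[OF B(2,4,3)] .
  define R where "R = B - BK"
  have fR: "finite R" "independent R" using fB B(3) R_def independent_mono by auto
  have DspB: "D = span B" using B(2,4) span_minimal[OF B(2) D] by blast
  have spR: "span R \<subseteq> D" using span_minimal[of R D] R_def B(2) D by blast
  have key: "z = 0" if z1: "z \<in> span R" and z2: "z \<in> span BK" for z
  proof -
    have fBK: "finite BK" using fB B(1) finite_subset by blast
    obtain u where u: "z = (\<Sum>v\<in>R. u v *s v)" using z1 span_finite[OF fR(1)] by blast
    obtain w where w: "z = (\<Sum>v\<in>BK. w v *s v)" using z2 span_finite[OF fBK] by blast
    define h where "h v = (if v \<in> R then u v else - w v)" for v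
    have BU: "B = R \<union> BK" "R \<inter> BK = {}" using R_def B(1) by auto
    have "(\<Sum>v\<in>B. h v *s v) = (\<Sum>v\<in>R. h v *s v) + (\<Sum>v\<in>BK. h v *s v)"
      using BU fR(1) fBK by (simp add: sum.union_disjoint)
    also have "(\<Sum>v\<in>R. h v *s v) = z" using u h_def by simp
    also have "(\<Sum>v\<in>BK. h v *s v) = (\<Sum>v\<in>BK. - (w v *s v))"
      using BU by (intro sum.cong) (auto simp: h_def)
    also have "\<dots> = - z" using w by (simp add: sum_negf)
    finally have s0: "(\<Sum>v\<in>B. h v *s v) = 0" by simp
    have "\<forall>v\<in>R. u v = 0"
    proof
      fix v assume "v \<in> R"
      then have "h v = 0" using independentD[OF B(3) fB order_refl s0] BU by auto
      then show "u v = 0" using \<open>v \<in> R\<close> h_def by simp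
    qed
    then show ?thesis using u by simp
  qed
  have inj: "inj_on f (span R)"
  proof (rule inj_onI)
    fix x y assume xy: "x \<in> span R" "y \<in> span R" "f x = f y"
    have "x - y \<in> span R" using xy span_diff by blast
    moreover have "f (x - y) = 0" using xy lf.diff by simp
    ultimately have "x - y \<in> span BK" using spR BK(3) K_def by blast
    with \<open>x - y \<in> span R\<close> key have "x - y = 0" by blast
    then show "x = y" by simp
  qed
  have "f ` D = span (f ` B)" using DspB lf.span_image by simp
  also have "span (f ` B) = span (f ` R)"
  proof (rule span_eq[THEN iffD2], rule conjI)
    show "f ` B \<subseteq> span (f ` R)"
    proof
      fix y assume "y \<in> f ` B"
      then obtain v where v: "v \<in> B" "y = f v" by blast
      show "y \<in> span (f ` R)"
      proof (cases "v \<in> BK")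
        case True then have "y = 0" using v BK(1) K_def by auto
        then show ?thesis by (simp add: span_zero)
      next
        case False then show ?thesis using v R_def by (auto intro: span_base)
      qed
    qed
    show "f ` R \<subseteq> span (f ` B)" using R_def by (auto intro: span_base)
  qed
  finally have "dim (f ` D) = dim (f ` R)" using dim_span by metis
  also have "\<dots> = dim R" using dim_inj_image[OF lf inj] .
  also have "\<dots> = card R" using dim_eq_card_independent[OF fR(2)] .
  finally have "dim (f ` D) = card R" .
  moreover have "card B = card R + card BK"
    using R_def B(1) fB card_Diff_subset[of BK B] card_mono[OF fB B(1)]
    by (simp add: finite_subset)
  ultimately show ?thesis using cB BK(4) K_def by simp
qed

end


definition wpr :: "nat set \<Rightarrow> (nat \<Rightarrow> 'a::zero) \<Rightarrow> (nat \<Rightarrow> 'a)" where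
  "wpr S c = (\<lambda>j. if j \<in> S then c j else 0)"

definition ZS :: "(nat \<Rightarrow> 'a::zero) set \<Rightarrow> nat set \<Rightarrow> (nat \<Rightarrow> 'a) set" where
  "ZS D S = {c\<in>D. \<forall>j. j \<notin> S \<longrightarrow> c j = 0}"

definition PD :: "(nat \<Rightarrow> 'a::field) set \<Rightarrow> nat set \<Rightarrow> nat" where
  "PD D S = wdim (wpr S ` D)"

definition ZD :: "(nat \<Rightarrow> 'a::field) set \<Rightarrow> nat set \<Rightarrow> nat" where
  "ZD D S = wdim (ZS D S)"

definition ev :: "nat \<Rightarrow> nat \<Rightarrow> 'a::field" where
  "ev j = (\<lambda>i. if i = j then 1 else 0)"

lemma wdim_eq: "wdim S = W.dim S"
  by (simp add: wdim_def)

lemma sum_fun_apply: "(sum f A) j = (\<Sum>a\<in>A. f a j)" for f :: "'b \<Rightarrow> nat \<Rightarrow> 'a::comm_monoid_add"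
  by (induction A rule: infinite_finite_induct) auto

lemma word_in_span:
  fixes c :: "nat \<Rightarrow> 'a::field"
  assumes "\<forall>j. j \<notin> S \<longrightarrow> c j = 0" "finite S"
  shows "c \<in> W.span (ev ` S)"
proof -
  have "c = (\<Sum>j\<in>S. wscale (c j) (ev j))"
  proof
    fix i
    have "(\<Sum>j\<in>S. wscale (c j) (ev j)) i = (\<Sum>j\<in>S. c j * ev j i)"
      by (simp add: sum_fun_apply wscale_def)
    also have "\<dots> = (\<Sum>j\<in>S. if j = i then c i else 0)"
      by (intro sum.cong) (auto simp: ev_def)
    also have "\<dots> = c i" using assms by (simp add: sum.delta)
    finally show "c i = (\<Sum>j\<in>S. wscale (c j) (ev j)) i" by simp
  qed
  also have "\<dots> \<in> W.span (ev ` S)"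
    by (intro W.span_sum W.span_scale W.span_base) auto
  finally show ?thesis .
qed

lemma wpr_hom: "module_hom (wscale :: 'a::field \<Rightarrow> _) wscale (wpr S)"
  unfolding module_hom_iff
  using W.module_axioms by (auto simp: wpr_def wscale_def fun_eq_iff)

definition lcode :: "nat \<Rightarrow> (nat \<Rightarrow> 'a::field) set \<Rightarrow> bool" where
  "lcode n D \<longleftrightarrow> W.subspace D \<and> (\<forall>c\<in>D. \<forall>j\<ge>n. c j = 0)"

lemma lcode_span:
  assumes "lcode n D" "X \<subseteq> D"
  shows "X \<subseteq> W.span (ev ` {..<n})"
  using assms word_in_span[of "{..<n}"] unfolding lcode_def by (auto simp: not_less)

lemma lcode_img_span:
  assumes "lcode n D"
  shows "wpr S ` D \<subseteq> W.span (ev ` {..<n})"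
proof
  fix y assume "y \<in> wpr S ` D"
  then obtain c where "c \<in> D" "y = wpr S c" by blast
  then show "y \<in> W.span (ev ` {..<n})"
    using assms word_in_span[of "{..<n}" y] unfolding lcode_def by (auto simp: wpr_def not_less)
qed

lemma subspace_ZS:
  assumes "W.subspace D" shows "W.subspace (ZS D S)"
  using assms unfolding W.subspace_def ZS_def by (auto simp: wscale_def)

lemma PD_card:
  fixes D :: "(nat \<Rightarrow> 'a::field) set"
  assumes "lcode n D" "finite S"
  shows "PD D S \<le> card S"
proof -
  have "wpr S ` D \<subseteq> W.span (ev ` S)"
  proof
    fix y assume "y \<in> wpr S ` D"
    then obtain c where "y = wpr S c" by blast
    moreover have "\<forall>j. j \<notin> S \<longrightarrow> y j = 0" using \<open>y = wpr S c\<close> by (simp add: wpr_def)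
    ultimately show "y \<in> W.span (ev ` S)" using word_in_span[OF _ assms(2), of y] by blast
  qed
  then have "PD D S \<le> card (ev ` S :: (nat \<Rightarrow> 'a) set)" unfolding PD_def wdim_eq
    using W.dim_le_card[of "wpr S ` D" "ev ` S"] assms(2) by simp
  also have "\<dots> \<le> card S" using card_image_le assms(2) by blast
  finally show ?thesis .
qed

lemma PD_Un:
  assumes "lcode n D" "S \<inter> T = {}"
  shows "PD D (S \<union> T) \<le> PD D S + PD D T"
proof -
  have "wpr (S \<union> T) ` D \<subseteq> W.span (wpr S ` D \<union> wpr T ` D)"
  proof
    fix y assume "y \<in> wpr (S \<union> T) ` D"
    then obtain c where c: "c \<in> D" "y = wpr (S \<union> T) c" by blast
    have "y = wpr S c + wpr T c" using c assms(2) by (auto simp: wpr_def fun_eq_iff)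
    then show "y \<in> W.span (wpr S ` D \<union> wpr T ` D)"
      using c by (metis W.span_add W.span_base UnI1 UnI2 imageI)
  qed
  moreover have "wpr S ` D \<union> wpr T ` D \<subseteq> W.span (ev ` {..<n})"
    using lcode_img_span[OF assms(1)] by blast
  ultimately have "PD D (S \<union> T) \<le> W.dim (wpr S ` D \<union> wpr T ` D)"
    unfolding PD_def wdim_eq by (intro W.dim_mono_fd) auto
  also have "\<dots> \<le> PD D S + PD D T" unfolding PD_def wdim_eq
    using lcode_img_span[OF assms(1)] by (intro W.dim_Un_fd) auto
  finally show ?thesis .
qed

lemma lcode_ZS: "lcode n D \<Longrightarrow> lcode n (ZS D S)"
  unfolding lcode_def using subspace_ZS by (auto simp: ZS_def)

lemma ZD_Un:
  assumes "lcode n D" "S \<inter> T = {}"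
  shows "ZD D S + ZD D T \<le> ZD D (S \<union> T)"
proof -
  define D' where "D' = ZS D (S \<union> T)"
  have l': "lcode n D'" using lcode_ZS assms(1) D'_def by blast
  have rn: "W.dim D' = W.dim (wpr S ` D') + W.dim {x\<in>D'. wpr S x = 0}"
    using W.rank_nullity_fd[OF wpr_hom, of D' "ev ` {..<n}"] l' lcode_span[OF l'] lcode_def by blast
  have "{x\<in>D'. wpr S x = 0} = ZS D T"
    using assms(2) by (auto simp: D'_def ZS_def wpr_def fun_eq_iff)
  moreover have "W.dim (ZS D S) \<le> W.dim (wpr S ` D')"
  proof (rule W.dim_mono_fd)
    show "ZS D S \<subseteq> W.span (wpr S ` D')"
    proof
      fix c assume c: "c \<in> ZS D S"
      then have "c = wpr S c" "c \<in> D'" by (auto simp: ZS_def D'_def wpr_def fun_eq_iff)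
      then show "c \<in> W.span (wpr S ` D')" by (metis W.span_base imageI)
    qed
    show "wpr S ` D' \<subseteq> W.span (ev ` {..<n})" using lcode_img_span[OF l'] .
  qed auto
  ultimately show ?thesis using rn unfolding ZD_def wdim_eq D'_def by simp
qed

lemma PD_ZD:
  assumes "lcode n D" "S \<subseteq> {..<n}"
  shows "wdim D = PD D S + ZD D ({..<n} - S)"
proof -
  have rn: "W.dim D = W.dim (wpr S ` D) + W.dim {x\<in>D. wpr S x = 0}"
    using W.rank_nullity_fd[OF wpr_hom, of D "ev ` {..<n}"] assms lcode_span[OF assms(1)] lcode_def by blast
  have "{x\<in>D. wpr S x = 0} = ZS D ({..<n} - S)"
    using assms unfolding lcode_def ZS_def wpr_def fun_eq_iff by (auto simp: not_less)
  then show ?thesis using rn unfolding PD_def ZD_def wdim_eq by simp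
qed

lemma dim_zero: "W.dim {0 :: nat \<Rightarrow> 'a::field} = 0"
  using W.dim_le_card[of "{0}" "{}"] by (simp add: W.span_zero)

lemma PD_empty: "lcode n D \<Longrightarrow> PD D {} = 0"
proof -
  assume "lcode n D"
  then have "0 \<in> D" using W.subspace_0 lcode_def by blast
  then have "wpr {} ` D = {0}" by (auto simp: wpr_def fun_eq_iff)
  then show ?thesis by (simp add: PD_def wdim_eq dim_zero)
qed

lemma ZD_empty: "lcode n D \<Longrightarrow> ZD D {} = 0"
proof -
  assume "lcode n D"
  then have "0 \<in> D" using W.subspace_0 lcode_def by blast
  then have "ZS D {} = {0}" by (auto simp: ZS_def fun_eq_iff)
  then show ?thesis by (simp add: ZD_def wdim_eq dim_zero)
qed


definition supw :: "nat \<Rightarrow> (nat \<Rightarrow> 'a::zero) \<Rightarrow> bool" where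
  "supw n c \<longleftrightarrow> (\<forall>j\<ge>n. c j = 0)"

lemma W_subspace_supw: "W.subspace {c :: nat \<Rightarrow> 'a::field. supw n c}"
  unfolding W.subspace_def supw_def by (auto simp: wscale_def)

lemma span_supw: "\<forall>c\<in>X. supw n c \<Longrightarrow> W.span X \<subseteq> {c. supw n c}"
  by (rule W.span_minimal) (auto intro: W_subspace_supw)

lemma dim_inj_supw:
  fixes f :: "(nat \<Rightarrow> 'a::field) \<Rightarrow> (nat \<Rightarrow> 'a)"
  assumes "module_hom wscale wscale f" "inj_on f {c. supw n c}" "\<forall>c\<in>X. supw n c"
  shows "W.dim (f ` X) = W.dim X"
  using W.dim_inj_image[OF assms(1)] inj_on_subset[OF assms(2) span_supw[OF assms(3)]] by blast

definition permw :: "nat \<Rightarrow> nat list \<Rightarrow> (nat \<Rightarrow> 'a::zero) \<Rightarrow> (nat \<Rightarrow> 'a)" where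
  "permw n g c = (\<lambda>i. if i < n then c (g ! i) else 0)"

lemma permute_code_eq: "permute_code n g C = permw n g ` C"
  by (simp add: permute_code_def permw_def)

lemma permw_hom: "module_hom (wscale :: 'a::field \<Rightarrow> _) wscale (permw n g)"
  unfolding module_hom_iff
  using W.module_axioms by (auto simp: permw_def wscale_def fun_eq_iff)

locale perm_setup =
  fixes n :: nat and g :: "nat list"
  assumes len: "length g = n" and dist: "distinct g" and setg: "set g = {..<n}"
begin

lemma g_surj: "j < n \<Longrightarrow> \<exists>i<n. g ! i = j"
  using setg len by (metis in_set_conv_nth lessThan_iff)

lemma g_lt: "i < n \<Longrightarrow> g ! i < n"
  using setg len nth_mem by fastforce

lemma g_inj: "i < n \<Longrightarrow> i' < n \<Longrightarrow> g ! i = g ! i' \<longleftrightarrow> i = i'"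
  using dist len nth_eq_iff_index_eq by metis

lemma permw_inj: "inj_on (permw n g) {c. supw n c}"
proof (rule inj_onI)
  fix c d assume c: "c \<in> {c. supw n c}" and d: "d \<in> {c. supw n c}" and e: "permw n g c = permw n g d"
  show "c = d"
  proof
    fix j show "c j = d j"
    proof (cases "j < n")
      case True
      then obtain i where "i < n" "g ! i = j" using g_surj by blast
      then show ?thesis using fun_cong[OF e, of i] by (simp add: permw_def)
    next
      case False then show ?thesis using c d by (simp add: supw_def)
    qed
  qed
qed

lemma lcode_permw: "lcode n C \<Longrightarrow> lcode n (permw n g ` C)"
  unfolding lcode_def
  using module_hom.subspace_image[OF permw_hom] by (auto simp: permw_def)

lemma PD_perm:
  assumes "lcode n C" "I \<subseteq> {..<n}"
  shows "PD (permw n g ` C) I = PD C ((\<lambda>i. g ! i) ` I)"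
proof -
  have e: "wpr I (permw n g c) = permw n g (wpr ((\<lambda>i. g ! i) ` I) c)" for c :: "nat \<Rightarrow> 'a"
  proof
    fix i show "wpr I (permw n g c) i = permw n g (wpr ((\<lambda>i. g ! i) ` I) c) i"
    proof (cases "i < n")
      case True
      have "g ! i \<in> (\<lambda>i. g ! i) ` I \<longleftrightarrow> i \<in> I"
        using True assms(2) g_inj by auto
      then show ?thesis using True assms(2) by (auto simp: wpr_def permw_def)
    next
      case False then show ?thesis using assms(2) by (auto simp: wpr_def permw_def)
    qed
  qed
  have "wpr I ` (permw n g ` C) = permw n g ` (wpr ((\<lambda>i. g ! i) ` I) ` C)"
    unfolding image_comp using e by (simp add: comp_def)
  moreover have "\<forall>c\<in>wpr ((\<lambda>i. g ! i) ` I) ` C. supw n c"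
    using assms(1) by (auto simp: lcode_def supw_def wpr_def)
  ultimately show ?thesis unfolding PD_def wdim_eq
    using dim_inj_supw[OF permw_hom permw_inj] by metis
qed

lemma ZD_perm:
  assumes "lcode n C" "I \<subseteq> {..<n}"
  shows "ZD (permw n g ` C) I = ZD C ((\<lambda>i. g ! i) ` I)"
proof -
  have cond: "(\<forall>i. i \<notin> I \<longrightarrow> permw n g c i = 0) \<longleftrightarrow> (\<forall>j. j \<notin> (\<lambda>i. g ! i) ` I \<longrightarrow> c j = 0)"
    if c: "c \<in> C" for c
  proof
    assume h: "\<forall>i. i \<notin> I \<longrightarrow> permw n g c i = 0"
    show "\<forall>j. j \<notin> (\<lambda>i. g ! i) ` I \<longrightarrow> c j = 0"
    proof (intro allI impI)
      fix j assume j: "j \<notin> (\<lambda>i. g ! i) ` I"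
      show "c j = 0"
      proof (cases "j < n")
        case True
        then obtain i where i: "i < n" "g ! i = j" using g_surj by blast
        then have "i \<notin> I" using j by blast
        then show ?thesis using h i by (auto simp: permw_def)
      next
        case False then show ?thesis using c assms(1) by (auto simp: lcode_def)
      qed
    qed
  next
    assume h: "\<forall>j. j \<notin> (\<lambda>i. g ! i) ` I \<longrightarrow> c j = 0"
    show "\<forall>i. i \<notin> I \<longrightarrow> permw n g c i = 0"
    proof (intro allI impI)
      fix i assume i: "i \<notin> I"
      show "permw n g c i = 0"
      proof (cases "i < n")
        case True
        then have "g ! i \<notin> (\<lambda>i. g ! i) ` I" using i g_inj assms(2) by auto
        then show ?thesis using h True by (simp add: permw_def)
      qed (simp add: permw_def)
    qed
  qed
  have "ZS (permw n g ` C) I = permw n g ` ZS C ((\<lambda>i. g ! i) ` I)"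
    unfolding ZS_def using cond by auto
  moreover have "\<forall>c\<in>ZS C ((\<lambda>i. g ! i) ` I). supw n c"
    using assms(1) by (auto simp: lcode_def supw_def ZS_def)
  ultimately show ?thesis unfolding ZD_def wdim_eq
    using dim_inj_supw[OF permw_hom permw_inj] by metis
qed

end

lemma cshift_hom: "module_hom (wscale :: 'a::field \<Rightarrow> _) wscale (cshift n)"
  unfolding module_hom_iff
  using W.module_axioms by (auto simp: cshift_def wscale_def fun_eq_iff)

lemma rot_aux:
  assumes "s < n" "j < n"
  shows "Suc s mod n = j \<longleftrightarrow> s = (j + n - 1) mod n"
proof -
  have e: "(j + n - 1) mod n = (if j = 0 then n - 1 else j - 1)"
  proof (cases "j = 0")
    case True then show ?thesis using assms by simp
  next
    case False
    then have "j + n - 1 = (j - 1) + n" by simp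
    then have "(j + n - 1) mod n = (j - 1) mod n" by simp
    also have "\<dots> = j - 1" using assms by simp
    finally show ?thesis using False by simp
  qed
  show ?thesis
  proof (cases "Suc s = n")
    case True then show ?thesis using e assms by auto
  next
    case False
    then have "Suc s < n" using assms by simp
    then show ?thesis using e assms by auto
  qed
qed

lemma cshift_inj: "0 < n \<Longrightarrow> inj_on (cshift n) {c. supw n c}"
proof (rule inj_onI)
  fix c d assume n: "0 < n" and c: "c \<in> {c. supw n c}" and d: "d \<in> {c. supw n c}"
    and e: "cshift n c = cshift n d"
  show "c = d"
  proof
    fix j show "c j = d j"
    proof (cases "j < n")
      case True
      have "Suc j mod n < n" using n by simp
      moreover have "j = (Suc j mod n + n - 1) mod n"
        using rot_aux[OF True \<open>Suc j mod n < n\<close>] by simp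
      ultimately show ?thesis using fun_cong[OF e, of "Suc j mod n"] by (simp add: cshift_def)
    next
      case False then show ?thesis using c d by (simp add: supw_def)
    qed
  qed
qed

definition rotn :: "nat \<Rightarrow> nat \<Rightarrow> nat set \<Rightarrow> nat set" where
  "rotn n k S = (\<lambda>j. (j + k) mod n) ` S"

locale cyc_setup =
  fixes n :: nat and C :: "(nat \<Rightarrow> 'a::field) set"
  assumes npos: "0 < n" and lc: "lcode n C" and cyc: "\<forall>c\<in>C. cshift n c \<in> C"
begin

lemma rotn_mem:
  assumes S: "S \<subseteq> {..<n}" and j: "j < n"
  shows "j \<in> rotn n 1 S \<longleftrightarrow> (j + n - 1) mod n \<in> S"
proof
  assume "j \<in> rotn n 1 S"
  then obtain s where s: "s \<in> S" "j = Suc s mod n" unfolding rotn_def by auto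
  then have "s < n" using S by auto
  then have "s = (j + n - 1) mod n" using rot_aux[OF _ j] s(2) by blast
  then show "(j + n - 1) mod n \<in> S" using s by simp
next
  assume h: "(j + n - 1) mod n \<in> S"
  define s where "s = (j + n - 1) mod n"
  have "s < n" using npos s_def by simp
  then have "Suc s mod n = j" using rot_aux[OF _ j] s_def by simp
  then show "j \<in> rotn n 1 S" unfolding rotn_def using h s_def by force
qed

lemma wpr_cshift:
  assumes S: "S \<subseteq> {..<n}"
  shows "wpr (rotn n 1 S) (cshift n c) = cshift n (wpr S c)"
proof
  fix j show "wpr (rotn n 1 S) (cshift n c) j = cshift n (wpr S c) j"
  proof (cases "j < n")
    case True
    have "j \<in> rotn n 1 S \<longleftrightarrow> (j + n - 1) mod n \<in> S"
      using rotn_mem[OF S True] .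
    then show ?thesis using True by (simp add: wpr_def cshift_def)
  next
    case False
    have "j \<notin> rotn n 1 S" using False npos unfolding rotn_def by auto
    then show ?thesis using False by (simp add: wpr_def cshift_def)
  qed
qed

lemma ZS_cshift:
  assumes S: "S \<subseteq> {..<n}" and c: "c \<in> ZS C S"
  shows "cshift n c \<in> ZS C (rotn n 1 S)"
proof -
  have "cshift n c j = 0" if j: "j \<notin> rotn n 1 S" for j
  proof (cases "j < n")
    case True
    have "(j + n - 1) mod n \<notin> S"
      using rotn_mem[OF S True] j by simp
    then show ?thesis using True c by (simp add: cshift_def ZS_def)
  qed (simp add: cshift_def)
  then show ?thesis using cyc c by (auto simp: ZS_def)
qed

lemma rotn_sub: "rotn n k S \<subseteq> {..<n}"
  using npos unfolding rotn_def by auto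

lemma rotn_Suc: "rotn n 1 (rotn n k S) = rotn n (Suc k) S"
  unfolding rotn_def image_comp by (auto simp: comp_def mod_Suc_eq)

lemma PD_rot1:
  assumes S: "S \<subseteq> {..<n}"
  shows "PD C S \<le> PD C (rotn n 1 S)"
proof -
  have "W.dim (wpr S ` C) = W.dim (cshift n ` (wpr S ` C))"
    using dim_inj_supw[OF cshift_hom cshift_inj[OF npos], of "wpr S ` C"] lc
    by (auto simp: lcode_def supw_def wpr_def)
  also have "\<dots> \<le> W.dim (wpr (rotn n 1 S) ` C)"
  proof (rule W.dim_mono_fd)
    show "cshift n ` wpr S ` C \<subseteq> W.span (wpr (rotn n 1 S) ` C)"
    proof
      fix y assume "y \<in> cshift n ` wpr S ` C"
      then obtain c where c: "c \<in> C" "y = cshift n (wpr S c)" by blast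
      then have "y = wpr (rotn n 1 S) (cshift n c)" using wpr_cshift[OF S] by metis
      then show "y \<in> W.span (wpr (rotn n 1 S) ` C)" using cyc c(1) by (auto intro: W.span_base)
    qed
    show "wpr (rotn n 1 S) ` C \<subseteq> W.span (ev ` {..<n})" using lcode_img_span[OF lc] .
  qed simp
  finally show ?thesis unfolding PD_def wdim_eq .
qed

lemma ZD_rot1:
  assumes S: "S \<subseteq> {..<n}"
  shows "ZD C S \<le> ZD C (rotn n 1 S)"
proof -
  have "W.dim (ZS C S) = W.dim (cshift n ` ZS C S)"
    using dim_inj_supw[OF cshift_hom cshift_inj[OF npos], of "ZS C S"] lc
    by (auto simp: lcode_def supw_def ZS_def)
  also have "\<dots> \<le> W.dim (ZS C (rotn n 1 S))"
  proof (rule W.dim_mono_fd)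
    show "cshift n ` ZS C S \<subseteq> W.span (ZS C (rotn n 1 S))"
      using ZS_cshift[OF S] by (auto intro: W.span_base)
    show "ZS C (rotn n 1 S) \<subseteq> W.span (ev ` {..<n})"
      using lcode_span[OF lc] by (auto simp: ZS_def)
  qed simp
  finally show ?thesis unfolding ZD_def wdim_eq .
qed

lemma PD_rotn: "S \<subseteq> {..<n} \<Longrightarrow> PD C S \<le> PD C (rotn n k S)"
proof (induction k)
  case 0
  have "rotn n 0 S = S" using 0 unfolding rotn_def by (force simp: image_iff)
  then show ?case by simp
next
  case (Suc k)
  then show ?case using PD_rot1[OF rotn_sub, of k S] rotn_Suc[of k S] by simp
qed

lemma ZD_rotn: "S \<subseteq> {..<n} \<Longrightarrow> ZD C S \<le> ZD C (rotn n k S)"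
proof (induction k)
  case 0
  have "rotn n 0 S = S" using 0 unfolding rotn_def by (force simp: image_iff)
  then show ?case by simp
next
  case (Suc k)
  then show ?case using ZD_rot1[OF rotn_sub, of k S] rotn_Suc[of k S] by simp
qed

end

lemma add_mod_inj:
  fixes j j' k n :: nat
  assumes "j < n" "j' < n" "(j + k) mod n = (j' + k) mod n"
  shows "j = j'"
proof -
  have aux: "a = b" if "a \<le> b" "b < n" "(a + k) mod n = (b + k) mod n" for a b
  proof -
    have "n dvd (b + k) - (a + k)" using mod_eq_dvd_iff_nat[of "a + k" "b + k" n] that by simp
    then have d: "n dvd b - a" by simp
    have "b - a < n" using that by simp
    then have "b - a = 0" using d by (metis dvd_imp_le not_le neq0_conv)
    then show ?thesis using that by simp
  qed
  show ?thesis using assms aux[of j j'] aux[of j' j] by (cases "j \<le> j'") auto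
qed

definition sset :: "nat \<Rightarrow> nat \<Rightarrow> nat \<Rightarrow> nat set" where
  "sset n m a = {j. j < n \<and> j mod m = a}"

lemma sset_img:
  assumes "0 < m" "a < m"
  shows "sset (m * r) m a = (\<lambda>s. a + m * s) ` {..<r}"
proof
  show "sset (m * r) m a \<subseteq> (\<lambda>s. a + m * s) ` {..<r}"
  proof
    fix j assume j: "j \<in> sset (m * r) m a"
    then have e: "j = a + m * (j div m)" using mod_mult_div_eq[of j m] by (simp add: sset_def)
    have "j div m < r" using j assms by (simp add: sset_def less_mult_imp_div_less mult.commute)
    then show "j \<in> (\<lambda>s. a + m * s) ` {..<r}" using e by blast
  qed
  show "(\<lambda>s. a + m * s) ` {..<r} \<subseteq> sset (m * r) m a"
  proof
    fix j assume "j \<in> (\<lambda>s. a + m * s) ` {..<r}"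
    then obtain s where s: "s < r" "j = a + m * s" by blast
    have "a + m * s < m + m * s" using assms by simp
    also have "\<dots> = m * Suc s" by simp
    also have "\<dots> \<le> m * r" using s by (intro mult_le_mono2) simp
    finally show "j \<in> sset (m * r) m a" using s assms by (simp add: sset_def)
  qed
qed

lemma card_sset:
  assumes "0 < m" "a < m"
  shows "card (sset (m * r) m a) = r"
proof -
  have "inj_on (\<lambda>s. a + m * s) {..<r}" using assms by (auto simp: inj_on_def)
  then show ?thesis using sset_img[OF assms] card_image by fastforce
qed

lemma rotn_sset:
  assumes "n = m * r" "0 < m" "a < m"
  shows "rotn n k (sset n m a) = sset n m ((a + k) mod m)"
proof (rule card_subset_eq)
  show "finite (sset n m ((a + k) mod m))" by (simp add: sset_def)
  have dvd: "m dvd n" using assms by simp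
  show "rotn n k (sset n m a) \<subseteq> sset n m ((a + k) mod m)"
  proof
    fix y assume "y \<in> rotn n k (sset n m a)"
    then obtain j where j: "j < n" "j mod m = a" "y = (j + k) mod n"
      unfolding rotn_def sset_def by blast
    have "y mod m = (j + k) mod m" using j mod_mod_cancel[OF dvd] by simp
    also have "\<dots> = (a + k) mod m" using j(2) mod_add_left_eq[of j m k] by simp
    moreover have "y < n" using j(1,3) by simp
    ultimately show "y \<in> sset n m ((a + k) mod m)" by (simp add: sset_def)
  qed
  have "inj_on (\<lambda>j. (j + k) mod n) (sset n m a)"
    by (rule inj_onI) (use add_mod_inj in \<open>auto simp: sset_def\<close>)
  then have "card (rotn n k (sset n m a)) = card (sset n m a)"
    unfolding rotn_def by (rule card_image)
  also have "\<dots> = r" using card_sset assms by simp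
  also have "\<dots> = card (sset n m ((a + k) mod m))" using card_sset assms by simp
  finally show "card (rotn n k (sset n m a)) = card (sset n m ((a + k) mod m))" .
qed

context cyc_setup begin

lemma sset_sub: "sset n m a \<subseteq> {..<n}" by (auto simp: sset_def)

lemma PD_sset:
  assumes "n = m * r" "0 < m" "a < m"
  shows "PD C (sset n m a) = PD C (sset n m 0)"
proof -
  have "PD C (sset n m 0) \<le> PD C (rotn n a (sset n m 0))" using PD_rotn sset_sub by blast
  also have "rotn n a (sset n m 0) = sset n m a" using rotn_sset[OF assms(1,2), of 0 a] assms by simp
  finally have 1: "PD C (sset n m 0) \<le> PD C (sset n m a)" .
  have "PD C (sset n m a) \<le> PD C (rotn n (m - a) (sset n m a))" using PD_rotn sset_sub by blast
  also have "rotn n (m - a) (sset n m a) = sset n m 0" using rotn_sset[OF assms, of "m - a"] assms by simp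
  finally show ?thesis using 1 by simp
qed

lemma ZD_sset:
  assumes "n = m * r" "0 < m" "a < m"
  shows "ZD C (sset n m a) = ZD C (sset n m 0)"
proof -
  have "ZD C (sset n m 0) \<le> ZD C (rotn n a (sset n m 0))" using ZD_rotn sset_sub by blast
  also have "rotn n a (sset n m 0) = sset n m a" using rotn_sset[OF assms(1,2), of 0 a] assms by simp
  finally have 1: "ZD C (sset n m 0) \<le> ZD C (sset n m a)" .
  have "ZD C (sset n m a) \<le> ZD C (rotn n (m - a) (sset n m a))" using ZD_rotn sset_sub by blast
  also have "rotn n (m - a) (sset n m a) = sset n m 0" using rotn_sset[OF assms, of "m - a"] assms by simp
  finally show ?thesis using 1 by simp
qed

end


definition dchain :: "nat list \<Rightarrow> bool" where
  "dchain ws \<longleftrightarrow> (\<forall>i. Suc i < length ws \<longrightarrow> ws ! Suc i dvd ws ! i \<and> 0 < ws ! Suc i)"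

lemma dchain_tl: "dchain (y # zs) \<Longrightarrow> dchain zs"
  unfolding dchain_def
proof (intro allI impI)
  fix i assume h: "\<forall>i. Suc i < length (y # zs) \<longrightarrow> (y # zs) ! Suc i dvd (y # zs) ! i \<and> 0 < (y # zs) ! Suc i"
    and i: "Suc i < length zs"
  from h[rule_format, of "Suc i"] i show "zs ! Suc i dvd zs ! i \<and> 0 < zs ! Suc i" by simp
qed

lemma dchain_hd: "dchain (y # z # zs) \<Longrightarrow> z dvd y \<and> 0 < z"
  unfolding dchain_def
proof -
  assume h: "\<forall>i. Suc i < length (y # z # zs) \<longrightarrow> (y # z # zs) ! Suc i dvd (y # z # zs) ! i \<and> 0 < (y # z # zs) ! Suc i"
  from h[rule_format, of 0] show ?thesis by simp
qed

lemma dchain_nth: "dchain ws \<Longrightarrow> 0 < ws ! 0 \<Longrightarrow> k < length ws \<Longrightarrow> ws ! k dvd ws ! 0 \<and> 0 < ws ! k"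
proof (induction k)
  case 0 then show ?case by simp
next
  case (Suc k)
  then have "ws ! Suc k dvd ws ! k \<and> 0 < ws ! Suc k" unfolding dchain_def by blast
  then show ?case using Suc by (meson Suc_lessD dvd_trans)
qed

lemma dchain_mem: "dchain (z # zs) \<Longrightarrow> 0 < z \<Longrightarrow> u \<in> set (z # zs) \<Longrightarrow> u dvd z \<and> 0 < u"
proof -
  assume a: "dchain (z # zs)" "0 < z" "u \<in> set (z # zs)"
  then obtain k where "k < length (z # zs)" "u = (z # zs) ! k" by (metis in_set_conv_nth)
  then show ?thesis using dchain_nth[OF a(1)] a(2) by simp
qed

lemma concat_block:
  assumes "\<forall>x\<in>set L. length x = z" "q < length L" "v + u \<le> z"
  shows "take u (drop (z * q + v) (concat L)) = take u (drop v (L ! q))"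
  using assms
proof (induction L arbitrary: q)
  case Nil then show ?case by simp
next
  case (Cons x L)
  show ?case
  proof (cases q)
    case 0
    have lx: "length x = z" using Cons by simp
    then have "drop v (x @ concat L) = drop v x @ concat L" using Cons.prems by simp
    moreover have "length (drop v x) \<ge> u" using lx Cons.prems by simp
    ultimately show ?thesis using 0 by simp
  next
    case (Suc q')
    have lx: "length x = z" using Cons by simp
    have "drop (z * q + v) (x @ concat L) = drop (z * q' + v) (concat L)"
      using lx Suc by simp
    then show ?thesis using Cons Suc by simp
  qed
qed

lemma set_take_drop:
  assumes h: "k + u \<le> length xs"
  shows "set (take u (drop k xs)) = (\<lambda>i. xs ! i) ` {k..<k+u}"
proof
  have len: "length (take u (drop k xs)) = u" using h by simp
  show "set (take u (drop k xs)) \<subseteq> (\<lambda>i. xs ! i) ` {k..<k+u}"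
  proof
    fix y assume "y \<in> set (take u (drop k xs))"
    then obtain i where i: "i < u" "y = take u (drop k xs) ! i" using len by (metis in_set_conv_nth)
    then have "y = xs ! (k + i)" using h by simp
    moreover have "k + i \<in> {k..<k+u}" using i by simp
    ultimately show "y \<in> (\<lambda>i. xs ! i) ` {k..<k+u}" by blast
  qed
  show "(\<lambda>i. xs ! i) ` {k..<k+u} \<subseteq> set (take u (drop k xs))"
  proof
    fix y assume "y \<in> (\<lambda>i. xs ! i) ` {k..<k+u}"
    then obtain i where i: "k \<le> i" "i < k + u" "y = xs ! i" by auto
    then have "y = take u (drop k xs) ! (i - k)" using h by simp
    moreover have "i - k < length (take u (drop k xs))" using len i by simp
    ultimately show "y \<in> set (take u (drop k xs))" by (metis nth_mem)
  qed
qed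

lemma filter_as:
  assumes "0 < m" "b < m"
  shows "filter (\<lambda>a. a mod m = b) [0..<m * r] = map (\<lambda>s. b + m * s) [0..<r]"
proof (rule sorted_distinct_set_unique)
  show "sorted (filter (\<lambda>a. a mod m = b) [0..<m * r])" by (rule sorted_wrt_filter) simp
  show "distinct (filter (\<lambda>a. a mod m = b) [0..<m * r])" by simp
  have "sorted_wrt (\<lambda>x y. 0 < m \<longrightarrow> x \<le> y) [0..<r]"
    by (rule sorted_wrt_mono_rel[of _ "(\<le>)"]) auto
  then show "sorted (map (\<lambda>s. b + m * s) [0..<r])"
    by (simp add: sorted_map)
  show "distinct (map (\<lambda>s. b + m * s) [0..<r])"
    using assms by (simp add: distinct_map inj_on_def)
  have "set (filter (\<lambda>a. a mod m = b) [0..<m * r]) = sset (m * r) m b"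
    by (auto simp: sset_def)
  also have "\<dots> = (\<lambda>s. b + m * s) ` {..<r}" using sset_img[OF assms] .
  finally show "set (filter (\<lambda>a. a mod m = b) [0..<m * r]) = set (map (\<lambda>s. b + m * s) [0..<r])"
    by (simp add: atLeast0LessThan)
qed


definition gprop :: "nat \<Rightarrow> nat \<Rightarrow> nat \<Rightarrow> nat list \<Rightarrow> nat list \<Rightarrow> bool" where
  "gprop n y b zs w \<longleftrightarrow> length w = y \<and> distinct w \<and> set w = sset n (n div y) b \<and>
    (\<forall>u\<in>set (y # zs). \<forall>t. u * (t + 1) \<le> y \<longrightarrow>
       (\<exists>a < n div u. set (take u (drop (u * t) w)) = sset n (n div u) a))"

lemma sset_disj: "a \<noteq> a' \<Longrightarrow> sset n M a \<inter> sset n M a' = {}"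
  by (auto simp: sset_def)

lemma gam_struct:
  assumes "dchain (y # zs)" "0 < y" "y dvd n" "b < n div y"
  shows "gprop n y b zs (gam_dfs n y b zs)"
  using assms
proof (induction zs arbitrary: y b)
  case Nil
  define m where "m = n div y"
  have m: "0 < m" using Nil m_def by simp
  have nm: "m * y = n" using Nil m_def by simp
  have st: "set (gam_dfs n y b []) = sset n m b" by (auto simp: sset_def m_def)
  have dist: "distinct (gam_dfs n y b [])" by simp
  have "card (sset n m b) = y" using card_sset[OF m Nil(4)[folded m_def], of y] unfolding nm .
  then have len: "length (gam_dfs n y b []) = y"
    using distinct_card[OF dist] st by simp
  have blk: "\<exists>a < n div u. set (take u (drop (u * t) (gam_dfs n y b []))) = sset n (n div u) a"
    if "u \<in> set [y]" "u * (t + 1) \<le> y" for u t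
  proof -
    have u: "u = y" using that by simp
    then have "t = 0" using that Nil(2) by (cases t) auto
    then show ?thesis using u len st Nil(4) m_def by auto
  qed
  show ?case unfolding gprop_def using len dist st blk m_def by blast
next
  case (Cons z zs)
  have zy: "z dvd y" "0 < z" using dchain_hd[OF Cons(2)] by auto
  have dz: "dchain (z # zs)" using dchain_tl[OF Cons(2)] .
  define m where "m = n div y"
  define r where "r = y div z"
  define M where "M = n div z"
  have yr: "y = r * z" using zy r_def by simp
  have nm: "n = m * y" using Cons(4) m_def by simp
  have Mmr: "M = m * r" using nm yr zy M_def by simp
  have nM: "n = M * z" using Mmr nm yr by simp
  have m0: "0 < m" "b < m" using Cons(5) m_def by auto
  have r0: "0 < r" using yr Cons(3) by (cases r) auto
  have M0: "0 < M" using Mmr m0 r0 by simp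
  have zn: "z dvd n" using zy(1) Cons(4) dvd_trans by blast
  define G where "G s = gam_dfs n z (b + m * s) zs" for s
  have bms: "b + m * s < M" if "s < r" for s
  proof -
    have "b + m * s < m + m * s" using m0 by simp
    also have "\<dots> = m * Suc s" by simp
    also have "\<dots> \<le> m * r" using that by (intro mult_le_mono2) simp
    finally show ?thesis using Mmr by simp
  qed
  have IH: "gprop n z (b + m * s) zs (G s)" if "s < r" for s
    unfolding G_def using Cons.IH[OF dz zy(2) zn] bms[OF that] M_def by simp
  have w: "gam_dfs n y b (z # zs) = concat (map G [0..<r])"
  proof -
    have "filter (\<lambda>a. a mod (n div y) = b) [0..<n div z] = map (\<lambda>s. b + m * s) [0..<r]"
      using filter_as[OF m0, of r] Mmr M_def m_def by simp
    then show ?thesis unfolding G_def[abs_def] by (simp add: comp_def)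
  qed
  have lenG: "\<forall>x\<in>set (map G [0..<r]). length x = z" using IH by (auto simp: gprop_def)
  have setG: "set (G s) = sset n M (b + m * s)" if "s < r" for s
    using IH[OF that] M_def by (simp add: gprop_def)
  have cardS: "card (sset n M a) = z" if "a < M" for a
    using card_sset[OF M0 that, of z] nM by simp
  have len: "length (concat (map G [0..<r])) = y"
  proof -
    have "length (concat (map G [0..<r])) = sum_list (map (\<lambda>s. length (G s)) [0..<r])"
      by (simp add: length_concat comp_def)
    also have "\<dots> = sum_list (map (\<lambda>s. z) [0..<r])"
      using lenG by (intro arg_cong[where f = sum_list] map_cong) auto
    also have "\<dots> = r * z" by (simp add: sum_list_triv)
    finally show ?thesis using yr by simp
  qed
  have dist: "distinct (concat (map G [0..<r]))"
  proof (rule distinct_concat)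
    have "inj_on G {0..<r}"
    proof (rule inj_onI)
      fix s s' assume ss: "s \<in> {0..<r}" "s' \<in> {0..<r}" "G s = G s'"
      have sr: "s < r" "s' < r" using ss by auto
      have "card (sset n M (b + m * s)) = z" using cardS[OF bms[OF sr(1)]] .
      then have "sset n M (b + m * s) \<noteq> {}" using zy(2) by auto
      then obtain j where j1: "j \<in> sset n M (b + m * s)" by blast
      have "sset n M (b + m * s) = sset n M (b + m * s')" using setG[OF sr(1)] setG[OF sr(2)] ss(3) by simp
      then have j2: "j \<in> sset n M (b + m * s')" using j1 by simp
      have "j mod M = b + m * s" using j1 unfolding sset_def by simp
      moreover have "j mod M = b + m * s'" using j2 unfolding sset_def by simp
      ultimately have "b + m * s = b + m * s'" by metis
      then show "s = s'" using m0 by simp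
    qed
    then show "distinct (map G [0..<r])" by (simp add: distinct_map)
    show "\<And>ys. ys \<in> set (map G [0..<r]) \<Longrightarrow> distinct ys" using IH by (auto simp: gprop_def)
    show "\<And>ys zs. ys \<in> set (map G [0..<r]) \<Longrightarrow> zs \<in> set (map G [0..<r]) \<Longrightarrow> ys \<noteq> zs \<Longrightarrow> set ys \<inter> set zs = {}"
    proof -
      fix ys zs' assume a: "ys \<in> set (map G [0..<r])" "zs' \<in> set (map G [0..<r])" "ys \<noteq> zs'"
      then obtain s s' where s: "s < r" "s' < r" "ys = G s" "zs' = G s'" by auto
      then have "s \<noteq> s'" using a by auto
      then have "b + m * s \<noteq> b + m * s'" using m0 by simp
      then show "set ys \<inter> set zs' = {}" using s(3,4) setG[OF s(1)] setG[OF s(2)] sset_disj by simp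
    qed
  qed
  have st: "set (concat (map G [0..<r])) = sset n m b"
  proof
    show "set (concat (map G [0..<r])) \<subseteq> sset n m b"
    proof
      fix j assume "j \<in> set (concat (map G [0..<r]))"
      then obtain s where s: "s < r" "j \<in> set (G s)" by auto
      then have j: "j < n" "j mod M = b + m * s" using setG by (auto simp: sset_def)
      have "m dvd M" using Mmr by simp
      then have "j mod m = (b + m * s) mod m" using j(2) mod_mod_cancel[of m M j] by simp
      also have "\<dots> = b" using m0 by simp
      finally show "j \<in> sset n m b" using j by (simp add: sset_def)
    qed
    show "sset n m b \<subseteq> set (concat (map G [0..<r]))"
    proof
      fix j assume j: "j \<in> sset n m b"
      have "m dvd M" using Mmr by simp
      then have "j mod M mod m = j mod m" using mod_mod_cancel[of m M j] by simp
      then have "j mod M mod m = b" using j unfolding sset_def by simp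
      moreover have "j mod M < m * r" using M0 Mmr by simp
      ultimately have "j mod M \<in> sset (m * r) m b" by (simp add: sset_def)
      then obtain s where s: "s < r" "j mod M = b + m * s" using sset_img[OF m0] by auto
      then have "j \<in> set (G s)" using setG j by (simp add: sset_def)
      then show "j \<in> set (concat (map G [0..<r]))" using s by auto
    qed
  qed
  have blk: "\<exists>a < n div u. set (take u (drop (u * t) (concat (map G [0..<r])))) = sset n (n div u) a"
    if u: "u \<in> set (y # z # zs)" and t: "u * (t + 1) \<le> y" for u t
  proof (cases "u = y")
    case True
    then have "t = 0" using t Cons(3) by (cases t) auto
    then show ?thesis using True len st Cons(5) m_def by auto
  next
    case False
    then have uz: "u \<in> set (z # zs)" using u by simp
    then have ud: "u dvd z" "0 < u" using dchain_mem[OF dz zy(2)] by auto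
    define d where "d = z div u"
    have zd: "z = d * u" using ud d_def by simp
    have d0: "0 < d" using zd zy(2) by (cases d) auto
    define q where "q = t div d"
    define p where "p = t mod d"
    have tqp: "t = d * q + p" using q_def p_def by simp
    have ut: "u * t = z * q + u * p" using tqp zd by (simp add: algebra_simps)
    have "u * (t + 1) \<le> u * (r * d)" using t yr zd by (simp add: algebra_simps)
    then have "t + 1 \<le> r * d" using ud(2) mult_le_cancel1 by blast
    then have "t < r * d" by simp
    then have qr: "q < r" using q_def less_mult_imp_div_less by blast
    have "p < d" using p_def d0 by simp
    then have "u * (p + 1) \<le> u * d" using ud(2) by (intro mult_le_mono2) simp
    then have pu: "u * p + u \<le> z" using zd by (simp add: algebra_simps)
    have "take u (drop (u * t) (concat (map G [0..<r]))) = take u (drop (u * p) (map G [0..<r] ! q))"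
      unfolding ut using concat_block[OF lenG _ pu] qr by simp
    also have "\<dots> = take u (drop (u * p) (G q))" using qr by simp
    finally have e: "take u (drop (u * t) (concat (map G [0..<r]))) = take u (drop (u * p) (G q))" .
    have "u * (p + 1) \<le> z" using pu by simp
    then show ?thesis using IH[OF qr] uz e unfolding gprop_def by auto
  qed
  show ?case unfolding gprop_def w using len dist st blk m_def by blast
qed


lemma blk_mem: "0 < (u::nat) \<Longrightarrow> y \<in> {u * k..<u * (k + 1)} \<longleftrightarrow> y div u = k"
proof -
  assume u: "0 < u"
  have "u * k \<le> y \<longleftrightarrow> k \<le> y div u" using u by (simp add: less_eq_div_iff_mult_less_eq mult.commute)
  moreover have "y < u * (k + 1) \<longleftrightarrow> y div u < k + 1" using u by (simp add: div_less_iff_less_mult mult.commute)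
  ultimately show ?thesis by auto
qed

lemma blk_range: "0 < (u::nat) \<Longrightarrow> y \<in> {u * a..<u * b} \<longleftrightarrow> a \<le> y div u \<and> y div u < b"
proof -
  assume u: "0 < u"
  have "u * a \<le> y \<longleftrightarrow> a \<le> y div u" using u by (simp add: less_eq_div_iff_mult_less_eq mult.commute)
  moreover have "y < u * b \<longleftrightarrow> y div u < b" using u by (simp add: div_less_iff_less_mult mult.commute)
  ultimately show ?thesis by auto
qed

lemma sub_UN:
  fixes F :: "nat set \<Rightarrow> int"
  assumes F0: "F {} = 0" and sub: "\<And>S T. S \<inter> T = {} \<Longrightarrow> F (S \<union> T) \<le> F S + F T"
  shows "finite K \<Longrightarrow> (\<forall>j\<in>K. \<forall>j'\<in>K. j \<noteq> j' \<longrightarrow> X j \<inter> X j' = {}) \<Longrightarrow> F (\<Union>j\<in>K. X j) \<le> (\<Sum>j\<in>K. F (X j))"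
proof (induction K rule: finite_induct)
  case empty then show ?case using F0 by simp
next
  case (insert a K)
  have h: "X a \<inter> X j = {}" if "j \<in> K" for j
  proof -
    have "a \<noteq> j" using that insert.hyps(2) by auto
    then show ?thesis using insert.prems that by blast
  qed
  then have "X a \<inter> (\<Union>j\<in>K. X j) = {}" by blast
  then have "F (X a \<union> (\<Union>j\<in>K. X j)) \<le> F (X a) + F (\<Union>j\<in>K. X j)" by (rule sub)
  also have "\<dots> \<le> F (X a) + (\<Sum>j\<in>K. F (X j))" using insert by simp
  finally show ?case using insert by simp
qed

lemma chain_bound:
  fixes F :: "nat set \<Rightarrow> int" and x :: "nat \<Rightarrow> nat" and c :: "nat \<Rightarrow> int" and \<beta> :: int
  assumes xpos: "\<And>r. 1 \<le> r \<Longrightarrow> r \<le> L + 1 \<Longrightarrow> 0 < x r"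
    and xdvd: "\<And>r. 1 \<le> r \<Longrightarrow> r \<le> L \<Longrightarrow> x r dvd x (Suc r)"
    and F0: "F {} = 0"
    and sub: "\<And>S T. S \<inter> T = {} \<Longrightarrow> F (S \<union> T) \<le> F S + F T"
    and blk: "\<And>r t. 1 \<le> r \<Longrightarrow> r \<le> L \<Longrightarrow> x r * (t + 1) \<le> n \<Longrightarrow> F {x r * t..<x r * (t + 1)} = c r"
    and base: "\<And>t i. x 1 * (t + 1) \<le> n \<Longrightarrow>
       F ({x 1 * t..<x 1 * (t + 1)} \<inter> {..<i}) + F ({x 1 * t..<x 1 * (t + 1)} \<inter> {i..}) \<le> \<beta>"
  shows "1 \<le> l \<Longrightarrow> l \<le> L + 1 \<Longrightarrow> x l * (t + 1) \<le> n \<Longrightarrow>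
    F ({x l * t..<x l * (t + 1)} \<inter> {..<i}) + F ({x l * t..<x l * (t + 1)} \<inter> {i..})
      \<le> (\<Sum>r\<in>{1..<l}. (int (x (Suc r) div x r) - 1) * c r) + \<beta>"
proof (induction l arbitrary: t i)
  case 0 then show ?case by simp
next
  case (Suc l)
  show ?case
  proof (cases "l = 0")
    case True
    then show ?thesis using base Suc.prems by simp
  next
    case False
    then have l1: "1 \<le> l" "l \<le> L" using Suc.prems by auto
    define bd where "bd = (\<Sum>r\<in>{1..<l}. (int (x (Suc r) div x r) - 1) * c r) + \<beta>"
    define u where "u = x l"
    define v where "v = x (Suc l)"
    define m where "m = v div u"
    have u0: "0 < u" using xpos l1 u_def by simp
    have v0: "0 < v" using xpos l1 v_def by simp
    have vmu: "v = u * m" using xdvd[OF l1] u_def v_def m_def by simp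
    have m0: "0 < m" using vmu v0 by (cases m) auto
    have IH: "F ({u * k..<u * (k + 1)} \<inter> {..<i'}) + F ({u * k..<u * (k + 1)} \<inter> {i'..}) \<le> bd"
      if "u * (k + 1) \<le> n" for k i'
      using Suc.IH[OF l1(1) _ that[unfolded u_def]] l1 bd_def u_def by simp
    define K where "K = {m * t..<m * (t + 1)}"
    define J where "J k = {u * k..<u * (k + 1)}" for k
    have vt: "v * (t + 1) \<le> n" using Suc.prems v_def by simp
    have Jn: "u * (k + 1) \<le> n" if "k \<in> K" for k
    proof -
      have "k + 1 \<le> m * (t + 1)" using that K_def by simp
      then have "u * (k + 1) \<le> u * (m * (t + 1))" by (rule mult_le_mono2)
      also have "\<dots> = v * (t + 1)" using vmu by (simp add: algebra_simps)
      finally show ?thesis using vt by simp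
    qed
    have cJ: "F (J k) = c l" if "k \<in> K" for k
      using blk[OF l1, of k] Jn[OF that] J_def u_def by simp
    have Ieq: "{v * t..<v * (t + 1)} = (\<Union>k\<in>K. J k)"
    proof -
      have "{v * t..<v * (t + 1)} = {u * (m * t)..<u * (m * (t + 1))}" using vmu by (simp add: algebra_simps)
      then show ?thesis unfolding K_def J_def using blk_range[OF u0] blk_mem[OF u0] by auto
    qed
    have disj: "\<forall>j\<in>K. \<forall>j'\<in>K. j \<noteq> j' \<longrightarrow> X j \<inter> X j' = {}" if "\<And>k. X k \<subseteq> J k" for X :: "nat \<Rightarrow> nat set"
    proof (intro ballI impI)
      fix j j' :: nat assume "j \<noteq> j'"
      have "y \<notin> J j'" if "y \<in> J j" for y
        using that \<open>j \<noteq> j'\<close> blk_mem[OF u0, of y j] blk_mem[OF u0, of y j'] unfolding J_def by simp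
      then have "J j \<inter> J j' = {}" by blast
      then show "X j \<inter> X j' = {}" using that[of j] that[of j'] by blast
    qed
    have finK: "finite K" using K_def by simp
    define A where "A = {..<i}"
    define B where "B = {i..}"
    have "F ({v * t..<v * (t + 1)} \<inter> A) = F (\<Union>k\<in>K. J k \<inter> A)" using Ieq by simp
    also have "\<dots> \<le> (\<Sum>k\<in>K. F (J k \<inter> A))"
    proof -
      have d: "\<forall>j\<in>K. \<forall>j'\<in>K. j \<noteq> j' \<longrightarrow> (J j \<inter> A) \<inter> (J j' \<inter> A) = {}"
        by (rule disj) blast
      show ?thesis using sub_UN[of F, OF F0 sub finK d] .
    qed
    finally have sA: "F ({v * t..<v * (t + 1)} \<inter> A) \<le> (\<Sum>k\<in>K. F (J k \<inter> A))" .
    have "F ({v * t..<v * (t + 1)} \<inter> B) = F (\<Union>k\<in>K. J k \<inter> B)" using Ieq by simp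
    also have "\<dots> \<le> (\<Sum>k\<in>K. F (J k \<inter> B))"
    proof -
      have d: "\<forall>j\<in>K. \<forall>j'\<in>K. j \<noteq> j' \<longrightarrow> (J j \<inter> B) \<inter> (J j' \<inter> B) = {}"
        by (rule disj) blast
      show ?thesis using sub_UN[of F, OF F0 sub finK d] .
    qed
    finally have sB: "F ({v * t..<v * (t + 1)} \<inter> B) \<le> (\<Sum>k\<in>K. F (J k \<inter> B))" .
    define T where "T k = F (J k \<inter> A) + F (J k \<inter> B)" for k
    have Tbd: "T k \<le> bd" if "k \<in> K" for k
      using IH[OF Jn[OF that], of i] unfolding T_def J_def A_def B_def .
    have mtK: "m * t \<in> K" using K_def m0 by simp
    have cbd: "c l \<le> bd"
    proof -
      have "J (m * t) \<inter> {..<u * (m * t)} = {}" "J (m * t) \<inter> {u * (m * t)..} = J (m * t)"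
        unfolding J_def by auto
      then show ?thesis using IH[OF Jn[OF mtK], of "u * (m * t)"] cJ[OF mtK] F0 unfolding J_def by simp
    qed
    define k0 where "k0 = (if i div u \<in> K then i div u else m * t)"
    have k0K: "k0 \<in> K" using k0_def mtK by simp
    have Tc: "T k = c l" if "k \<in> K" "k \<noteq> k0" for k
    proof -
      have "i div u \<noteq> k" using that k0_def by auto
      then have "i \<le> u * k \<or> u * (k + 1) \<le> i" using blk_mem[OF u0, of i k] by auto
      then show ?thesis
      proof
        assume "i \<le> u * k"
        then have "J k \<inter> A = {}" "J k \<inter> B = J k" unfolding J_def A_def B_def by auto
        then show ?thesis using cJ[OF that(1)] F0 T_def by simp
      next
        assume "u * (k + 1) \<le> i"
        then have "J k \<inter> A = J k" "J k \<inter> B = {}" unfolding J_def A_def B_def by auto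
        then show ?thesis using cJ[OF that(1)] F0 T_def by simp
      qed
    qed
    have cardK: "card K = m" using K_def by simp
    have "(\<Sum>k\<in>K. T k) = T k0 + (\<Sum>k\<in>K - {k0}. T k)"
      using finK k0K by (simp add: sum.remove)
    also have "(\<Sum>k\<in>K - {k0}. T k) = (\<Sum>k\<in>K - {k0}. c l)"
      using Tc by (intro sum.cong) auto
    also have "\<dots> = (int m - 1) * c l" using cardK k0K finK m0 by (simp add: of_nat_diff)
    finally have "(\<Sum>k\<in>K. T k) \<le> bd + (int m - 1) * c l" using Tbd[OF k0K] by simp
    moreover have "(\<Sum>k\<in>K. T k) = (\<Sum>k\<in>K. F (J k \<inter> A)) + (\<Sum>k\<in>K. F (J k \<inter> B))"
      unfolding T_def by (simp add: sum.distrib)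
    ultimately have main: "F ({v * t..<v * (t + 1)} \<inter> A) + F ({v * t..<v * (t + 1)} \<inter> B) \<le> bd + (int m - 1) * c l"
      using sA sB by simp
    have "(\<Sum>r\<in>{1..<Suc l}. (int (x (Suc r) div x r) - 1) * c r) + \<beta> = bd + (int m - 1) * c l"
      using l1 by (simp add: bd_def m_def u_def v_def sum.atLeastLessThan_Suc)
    then show ?thesis using main A_def B_def v_def by simp
  qed
qed


lemma punct_eq: "punct_dim D i = PD D {0..<i}"
  unfolding punct_dim_def PD_def wpr_def by simp

lemma past_eq:
  assumes "lcode n D"
  shows "past_dim n D i = ZD D {0..<i}"
proof -
  have "{c\<in>D. \<forall>j. i \<le> j \<and> j < n \<longrightarrow> c j = 0} = ZS D {0..<i}"
    using assms unfolding ZS_def lcode_def by (auto simp: not_less) (metis linorder_not_le)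
  then show ?thesis unfolding past_dim_def ZD_def by simp
qed

lemma fut_eq:
  assumes "lcode n D"
  shows "future_dim n D i = ZD D {i..<n}"
proof -
  have "{c\<in>D. \<forall>j<i. c j = 0} = ZS D {i..<n}"
    using assms unfolding ZS_def lcode_def by (auto simp: not_less)
  then show ?thesis unfolding future_dim_def ZD_def by simp
qed

lemma state_eq:
  assumes "lcode n D"
  shows "state_cx n D i = int (wdim D) - int (ZD D {0..<i}) - int (ZD D {i..<n})"
  unfolding state_cx_def past_eq[OF assms] fut_eq[OF assms] by simp

lemma rank_two:
  assumes "lcode n D" "i \<le> n"
  shows "wdim D = PD D {0..<i} + ZD D {i..<n}" "wdim D = PD D {i..<n} + ZD D {0..<i}"
proof -
  have "{..<n} - {0..<i} = {i..<n}" by auto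
  moreover have "{0..<i} \<subseteq> {..<n}" using assms(2) by auto
  ultimately show "wdim D = PD D {0..<i} + ZD D {i..<n}" using PD_ZD[OF assms(1), of "{0..<i}"] by simp
  have "{..<n} - {i..<n} = {0..<i}" using assms(2) by auto
  moreover have "{i..<n} \<subseteq> {..<n}" by auto
  ultimately show "wdim D = PD D {i..<n} + ZD D {0..<i}" using PD_ZD[OF assms(1), of "{i..<n}"] by simp
qed

lemma telescope: "(\<Sum>r=1..L. (int (f (Suc r)) - int (f r))) = int (f (Suc L)) - int (f 1)"
  by (induction L) simp_all


theorem theorem3:
  fixes C :: "(nat \<Rightarrow> 'a::{finite,field}) set" and n k :: nat and xs :: "nat list"
  assumes "cyclic_code n C"
    and "wdim C = k"
    and "coprime n (card (UNIV :: 'a set))"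
    and "1 < n" and "\<not> prime n"
    and "divisor_chain n xs"
  defines "C' \<equiv> permute_code n (gamma_order n xs) C"
    and "L \<equiv> length xs"
    and "x \<equiv> (\<lambda>i. if 1 \<le> i \<and> i \<le> length xs then xs ! (i - 1) else n)"
  shows "Max ((\<lambda>i. state_cx n C' i) ` {0..n}) \<le>
    min (min (int k) (int n - int k))
        (min ((\<Sum>i=1..L. (int (x (i+1) div x i) - 1) * int (punct_dim C' (x i))) + int (x 1) - int k)
             ((\<Sum>i=1..L. (int (x (i+1) div x i) - 1) * (int (x i) - int (past_dim n C' (x i))))
                + int (x 1) - (int n - int k)))"
proof -
  define g where "g = gamma_order n xs"
  have n0: "0 < n" using assms(4) by simp
  have dc: "xs \<noteq> []" "\<forall>v\<in>set xs. v dvd n \<and> v \<noteq> 1 \<and> v \<noteq> n"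
    "\<And>a. Suc a < length xs \<Longrightarrow> xs ! a dvd xs ! Suc a"
    using assms(6) unfolding divisor_chain_def by auto
  have xs_pos: "0 < v \<and> v dvd n" if "v \<in> set xs" for v
  proof -
    have "v dvd n" using dc(2) that by blast
    moreover have "v \<noteq> 0" using \<open>v dvd n\<close> n0 by (metis dvd_0_left_iff less_irrefl)
    ultimately show ?thesis by simp
  qed
  have dch: "dchain (n # rev xs)"
    unfolding dchain_def
  proof (intro allI impI)
    fix i assume i: "Suc i < length (n # rev xs)"
    then have il: "i < length xs" by simp
    show "(n # rev xs) ! Suc i dvd (n # rev xs) ! i \<and> 0 < (n # rev xs) ! Suc i"
    proof (cases i)
      case 0
      have "rev xs ! 0 \<in> set xs" using il 0 by (metis length_rev nth_mem set_rev)
      then show ?thesis using 0 xs_pos by simp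
    next
      case (Suc i')
      have m1: "rev xs ! i \<in> set xs" using il by (metis length_rev nth_mem set_rev)
      have e1: "rev xs ! i = xs ! (length xs - 1 - i)" using il rev_nth[of i xs] by simp
      have "i' < length xs" using il Suc by simp
      then have e2: "rev xs ! i' = xs ! (length xs - 1 - i')" using rev_nth[of i' xs] by simp
      define a where "a = length xs - 1 - i"
      have "Suc a = length xs - 1 - i'" using il Suc a_def by simp
      moreover have "Suc a < length xs" using il Suc a_def by simp
      ultimately have "xs ! a dvd xs ! (length xs - 1 - i')" using dc(3)[of a] by simp
      then show ?thesis using Suc e1 e2 a_def m1 xs_pos by simp
    qed
  qed
  have gp: "gprop n n 0 (rev xs) g"
    using gam_struct[OF dch n0 dvd_refl] n0 by (simp add: g_def gamma_order_def)
  have glen: "length g = n" and gdist: "distinct g" and gset: "set g = {..<n}"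
    using gp unfolding gprop_def sset_def by auto
  interpret P: perm_setup n g using glen gdist gset by unfold_locales
  have lcC: "lcode n C" using assms(1) unfolding cyclic_code_def linear_code_def lcode_def by simp
  have cycC: "\<forall>c\<in>C. cshift n c \<in> C" using assms(1) unfolding cyclic_code_def by simp
  interpret Cy: cyc_setup n C using n0 lcC cycC by unfold_locales
  have C'eq: "C' = permw n g ` C" unfolding C'_def g_def permute_code_eq ..
  have lcD: "lcode n C'" using P.lcode_permw[OF lcC] C'eq by simp
  have kD: "wdim C' = k"
  proof -
    have "\<forall>c\<in>C. supw n c" using lcC unfolding lcode_def supw_def by simp
    then have "W.dim (permw n g ` C) = W.dim C" using dim_inj_supw[OF permw_hom P.permw_inj] by blast
    then show ?thesis using assms(2) C'eq wdim_eq by metis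
  qed
  have xr: "x r = xs ! (r - 1)" if "1 \<le> r" "r \<le> L" for r using that x_def L_def by simp
  have xL: "x (Suc L) = n" using x_def L_def by simp
  have xmem: "x r \<in> set (n # rev xs)" if "1 \<le> r" "r \<le> L + 1" for r
  proof (cases "r \<le> L")
    case True
    then have "x r \<in> set xs" using xr that L_def by simp
    then show ?thesis by simp
  next
    case False
    then have "r = Suc L" using that by simp
    then show ?thesis using xL by simp
  qed
  have xpos: "0 < x r" "x r dvd n" if "1 \<le> r" "r \<le> L + 1" for r
    using xmem[OF that] xs_pos n0 by auto
  have xdvd: "x r dvd x (Suc r)" if "1 \<le> r" "r \<le> L" for r
  proof (cases "r = L")
    case True
    then show ?thesis using xpos[of r] that xL by simp
  next
    case False
    then have "Suc (r - 1) < length xs" using that L_def by simp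
    then have "xs ! (r - 1) dvd xs ! Suc (r - 1)" using dc(3) by blast
    moreover have "x (Suc r) = xs ! Suc (r - 1)" using xr[of "Suc r"] that False by simp
    ultimately show ?thesis using xr[OF that] by simp
  qed
  have gblk: "\<exists>a < n div x r. (\<lambda>i. g ! i) ` {x r * t..<x r * (t + 1)} = sset n (n div x r) a"
    if r: "1 \<le> r" "r \<le> L + 1" and t: "x r * (t + 1) \<le> n" for r t
  proof -
    obtain a where a: "a < n div x r" "set (take (x r) (drop (x r * t) g)) = sset n (n div x r) a"
      using gp xmem[OF r] t unfolding gprop_def by blast
    have "set (take (x r) (drop (x r * t) g)) = (\<lambda>i. g ! i) ` {x r * t..<x r * t + x r}"
      using set_take_drop[of "x r * t" "x r" g] t glen by (simp add: algebra_simps)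
    moreover have "x r * t + x r = x r * (t + 1)" by simp
    ultimately show ?thesis using a by metis
  qed
  have Isub: "{x r * t..<x r * (t + 1)} \<subseteq> {..<n}" if "x r * (t + 1) \<le> n" for r t
    using that by auto
  have PDblk: "PD C' {x r * t..<x r * (t + 1)} = PD C (sset n (n div x r) 0)"
    if r: "1 \<le> r" "r \<le> L + 1" and t: "x r * (t + 1) \<le> n" for r t
  proof -
    obtain a where a: "a < n div x r" "(\<lambda>i. g ! i) ` {x r * t..<x r * (t + 1)} = sset n (n div x r) a"
      using gblk[OF r t] by blast
    have nm: "n = (n div x r) * x r" using xpos[OF r] by simp
    have "PD C' {x r * t..<x r * (t + 1)} = PD C (sset n (n div x r) a)"
      using P.PD_perm[OF lcC Isub[OF t]] a(2) C'eq by simp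
    also have "\<dots> = PD C (sset n (n div x r) 0)" using Cy.PD_sset[OF nm _ a(1)] a(1) by simp
    finally show ?thesis .
  qed
  have ZDblk: "ZD C' {x r * t..<x r * (t + 1)} = ZD C (sset n (n div x r) 0)"
    if r: "1 \<le> r" "r \<le> L + 1" and t: "x r * (t + 1) \<le> n" for r t
  proof -
    obtain a where a: "a < n div x r" "(\<lambda>i. g ! i) ` {x r * t..<x r * (t + 1)} = sset n (n div x r) a"
      using gblk[OF r t] by blast
    have nm: "n = (n div x r) * x r" using xpos[OF r] by simp
    have "ZD C' {x r * t..<x r * (t + 1)} = ZD C (sset n (n div x r) a)"
      using P.ZD_perm[OF lcC Isub[OF t]] a(2) C'eq by simp
    also have "\<dots> = ZD C (sset n (n div x r) 0)" using Cy.ZD_sset[OF nm _ a(1)] a(1) by simp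
    finally show ?thesis .
  qed
  have x1n: "x r * (0 + 1) \<le> n" if "1 \<le> r" "r \<le> L + 1" for r
    using xpos[OF that] n0 by (simp add: dvd_imp_le)
  have PDr: "PD C' {x r * t..<x r * (t + 1)} = punct_dim C' (x r)"
    if r: "1 \<le> r" "r \<le> L + 1" and t: "x r * (t + 1) \<le> n" for r t
    using PDblk[OF r t] PDblk[OF r x1n[OF r]] punct_eq[of C' "x r"] by simp
  have ZDr: "ZD C' {x r * t..<x r * (t + 1)} = past_dim n C' (x r)"
    if r: "1 \<le> r" "r \<le> L + 1" and t: "x r * (t + 1) \<le> n" for r t
    using ZDblk[OF r t] ZDblk[OF r x1n[OF r]] past_eq[OF lcD, of "x r"] by simp
  have bound: "state_cx n C' i \<le>
    min (min (int k) (int n - int k))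
        (min ((\<Sum>i=1..L. (int (x (i+1) div x i) - 1) * int (punct_dim C' (x i))) + int (x 1) - int k)
             ((\<Sum>i=1..L. (int (x (i+1) div x i) - 1) * (int (x i) - int (past_dim n C' (x i))))
                + int (x 1) - (int n - int k)))" if i: "i \<le> n" for i
  proof -
    define PA where "PA = PD C' {0..<i}"
    define PB where "PB = PD C' {i..<n}"
    define ZA where "ZA = ZD C' {0..<i}"
    define ZB where "ZB = ZD C' {i..<n}"
    have se: "state_cx n C' i = int k - int ZA - int ZB"
      using state_eq[OF lcD] kD ZA_def ZB_def by simp
    have r2: "k = PA + ZB" "k = PB + ZA" using rank_two[OF lcD i] kD PA_def PB_def ZA_def ZB_def by auto
    have s2: "state_cx n C' i = int PA + int PB - int k" using se r2 by simp
    have b1: "state_cx n C' i \<le> int k" using se by simp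
    have "PA \<le> i" using PD_card[OF lcD, of "{0..<i}"] PA_def by simp
    moreover have "PB \<le> n - i" using PD_card[OF lcD, of "{i..<n}"] PB_def by simp
    ultimately have b2: "state_cx n C' i \<le> int n - int k" using s2 i by simp
    have AB: "{x (Suc L) * 0..<x (Suc L) * (0 + 1)} \<inter> {..<i} = {0..<i}"
      "{x (Suc L) * 0..<x (Suc L) * (0 + 1)} \<inter> {i..} = {i..<n}" using xL i by auto
    have nn: "x (Suc L) * (0 + 1) \<le> n" using xL by simp
    have cb3: "int (PD C' ({x (Suc L) * 0..<x (Suc L) * (0 + 1)} \<inter> {..<i})) +
        int (PD C' ({x (Suc L) * 0..<x (Suc L) * (0 + 1)} \<inter> {i..}))
      \<le> (\<Sum>r\<in>{1..<Suc L}. (int (x (Suc r) div x r) - 1) * int (punct_dim C' (x r))) + int (x 1)"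
    proof (rule chain_bound[where F = "\<lambda>S. int (PD C' S)" and x = x and L = L and n = n
          and c = "\<lambda>r. int (punct_dim C' (x r))" and \<beta> = "int (x 1)"])
      show "\<And>r. 1 \<le> r \<Longrightarrow> r \<le> L + 1 \<Longrightarrow> 0 < x r" using xpos by blast
      show "\<And>r. 1 \<le> r \<Longrightarrow> r \<le> L \<Longrightarrow> x r dvd x (Suc r)" using xdvd by blast
      show "int (PD C' {}) = 0" using PD_empty[OF lcD] by simp
      show "int (PD C' (S \<union> T)) \<le> int (PD C' S) + int (PD C' T)" if "S \<inter> T = {}" for S T
      proof -
        have "PD C' (S \<union> T) \<le> PD C' S + PD C' T" using PD_Un[OF lcD that] .
        then show ?thesis by simp
      qed
      show "\<And>r t. 1 \<le> r \<Longrightarrow> r \<le> L \<Longrightarrow> x r * (t + 1) \<le> n \<Longrightarrow>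
          int (PD C' {x r * t..<x r * (t + 1)}) = int (punct_dim C' (x r))"
        using PDr by simp
      show "int (PD C' ({x 1 * t..<x 1 * (t + 1)} \<inter> {..<i'})) + int (PD C' ({x 1 * t..<x 1 * (t + 1)} \<inter> {i'..}))
          \<le> int (x 1)" if "x 1 * (t + 1) \<le> n" for t i'
      proof -
        define J where "J = {x 1 * t..<x 1 * (t + 1)}"
        have "PD C' (J \<inter> {..<i'}) \<le> card (J \<inter> {..<i'})" using PD_card[OF lcD] J_def by simp
        moreover have "PD C' (J \<inter> {i'..}) \<le> card (J \<inter> {i'..})" using PD_card[OF lcD] J_def by simp
        moreover have "card (J \<inter> {..<i'}) + card (J \<inter> {i'..}) = card J"
        proof -
          have "J = (J \<inter> {..<i'}) \<union> (J \<inter> {i'..})" by auto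
          moreover have "(J \<inter> {..<i'}) \<inter> (J \<inter> {i'..}) = {}" by auto
          ultimately show ?thesis using J_def card_Un_disjoint[of "J \<inter> {..<i'}" "J \<inter> {i'..}"] by simp
        qed
        moreover have "card J = x 1" using J_def by (simp add: algebra_simps)
        ultimately show ?thesis using J_def by simp
      qed
    qed (use nn L_def in auto)
    then have "int PA + int PB \<le> (\<Sum>r=1..L. (int (x (Suc r) div x r) - 1) * int (punct_dim C' (x r))) + int (x 1)"
      using AB PA_def PB_def by (simp add: atLeastLessThanSuc_atLeastAtMost)
    then have b3: "state_cx n C' i \<le> (\<Sum>i=1..L. (int (x (i+1) div x i) - 1) * int (punct_dim C' (x i))) + int (x 1) - int k"
      using s2 by simp
    have cb4: "- int (ZD C' ({x (Suc L) * 0..<x (Suc L) * (0 + 1)} \<inter> {..<i})) +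
        - int (ZD C' ({x (Suc L) * 0..<x (Suc L) * (0 + 1)} \<inter> {i..}))
      \<le> (\<Sum>r\<in>{1..<Suc L}. (int (x (Suc r) div x r) - 1) * - int (past_dim n C' (x r))) + 0"
    proof (rule chain_bound[where F = "\<lambda>S. - int (ZD C' S)" and x = x and L = L and n = n
          and c = "\<lambda>r. - int (past_dim n C' (x r))" and \<beta> = 0])
      show "\<And>r. 1 \<le> r \<Longrightarrow> r \<le> L + 1 \<Longrightarrow> 0 < x r" using xpos by blast
      show "\<And>r. 1 \<le> r \<Longrightarrow> r \<le> L \<Longrightarrow> x r dvd x (Suc r)" using xdvd by blast
      show "- int (ZD C' {}) = 0" using ZD_empty[OF lcD] by simp
      show "- int (ZD C' (S \<union> T)) \<le> - int (ZD C' S) + - int (ZD C' T)" if "S \<inter> T = {}" for S T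
      proof -
        have "ZD C' S + ZD C' T \<le> ZD C' (S \<union> T)" using ZD_Un[OF lcD that] .
        then show ?thesis by simp
      qed
      show "\<And>r t. 1 \<le> r \<Longrightarrow> r \<le> L \<Longrightarrow> x r * (t + 1) \<le> n \<Longrightarrow>
          - int (ZD C' {x r * t..<x r * (t + 1)}) = - int (past_dim n C' (x r))"
        using ZDr by simp
      show "- int (ZD C' ({x 1 * t..<x 1 * (t + 1)} \<inter> {..<i'})) + - int (ZD C' ({x 1 * t..<x 1 * (t + 1)} \<inter> {i'..}))
          \<le> 0" for t i' by simp
    qed (use nn L_def in auto)
    then have zs: "- int ZA - int ZB \<le> (\<Sum>r=1..L. (int (x (Suc r) div x r) - 1) * - int (past_dim n C' (x r)))"
      using AB ZA_def ZB_def by (simp add: atLeastLessThanSuc_atLeastAtMost)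
    have tel: "(\<Sum>r=1..L. (int (x (Suc r) div x r) - 1) * int (x r)) = int n - int (x 1)"
    proof -
      have "(\<Sum>r=1..L. (int (x (Suc r) div x r) - 1) * int (x r)) = (\<Sum>r=1..L. (int (x (Suc r)) - int (x r)))"
      proof (rule sum.cong)
        fix r assume "r \<in> {1..L}"
        then have "x r dvd x (Suc r)" using xdvd by simp
        then have "x (Suc r) = (x (Suc r) div x r) * x r" by simp
        then have "int (x (Suc r)) = int (x (Suc r) div x r) * int (x r)" by (metis of_nat_mult)
        then show "(int (x (Suc r) div x r) - 1) * int (x r) = int (x (Suc r)) - int (x r)"
          by (simp add: algebra_simps)
      qed simp
      also have "\<dots> = int (x (Suc L)) - int (x 1)" by (rule telescope)
      finally show ?thesis using xL by simp
    qed
    have "(\<Sum>i=1..L. (int (x (i+1) div x i) - 1) * (int (x i) - int (past_dim n C' (x i))))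
        = (\<Sum>r=1..L. (int (x (Suc r) div x r) - 1) * int (x r)) + (\<Sum>r=1..L. (int (x (Suc r) div x r) - 1) * - int (past_dim n C' (x r)))"
      by (simp add: algebra_simps sum.distrib sum_subtractf)
    then have b4: "state_cx n C' i \<le> (\<Sum>i=1..L. (int (x (i+1) div x i) - 1) * (int (x i) - int (past_dim n C' (x i))))
                + int (x 1) - (int n - int k)"
      using tel zs se by simp
    show ?thesis using b1 b2 b3 b4 by simp
  qed
  have fin: "finite ((\<lambda>i. state_cx n C' i) ` {0..n})" by simp
  have ne: "(\<lambda>i. state_cx n C' i) ` {0..n} \<noteq> {}" by simp
  show ?thesis unfolding Max_le_iff[OF fin ne] using bound by auto
qed

end
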